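(* Let $(G,\cdot,N,\star,\odot)$ be a left bracoid, i.e. a left skew bracoid in which $(N,\star)$ is abelian. Then for every $g\in G$ the map $\alpha(g):N\to N$, ${}^{\alpha(g)}\eta=\overline{(g\odot e_N)}\star(g\odot\eta)\star\overline{\eta}$, is an endomorphism of the group $(N,\star)$.
   Context: For a group $(N,\star)$, $e_N$ denotes its identity and $\overline{\eta}$ the inverse of $\eta$. A left skew bracoid is a 5-tuple $(G,\cdot,N,\star,\odot)$ where $(G,\cdot)$ and $(N,\star)$ are groups and $\odot$ is a transitive (left) action of $(G,\cdot)$ on the set $N$ such that $g\odot(\mu\star\eta)=(g\odot\mu)\star\overline{(g\odot e_N)}\star(g\odot\eta)$ for all $g\in G$, $\mu,\eta\in N$. *)

theory Defs
  imports "HOL-Algebra.Group"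
begin

definition transitive_action :: "('g, 'a) monoid_scheme \<Rightarrow> 'n set \<Rightarrow> ('g \<Rightarrow> 'n \<Rightarrow> 'n) \<Rightarrow> bool" where
  "transitive_action G X act \<longleftrightarrow>
     (\<forall>g\<in>carrier G. \<forall>x\<in>X. act g x \<in> X) \<and>
     (\<forall>x\<in>X. act \<one>\<^bsub>G\<^esub> x = x) \<and>
     (\<forall>g\<in>carrier G. \<forall>h\<in>carrier G. \<forall>x\<in>X. act (g \<otimes>\<^bsub>G\<^esub> h) x = act g (act h x)) \<and>
     (\<forall>x\<in>X. \<forall>y\<in>X. \<exists>g\<in>carrier G. act g x = y)"

definition skew_bracoid :: "('g, 'a) monoid_scheme \<Rightarrow> ('n, 'b) monoid_scheme \<Rightarrow> ('g \<Rightarrow> 'n \<Rightarrow> 'n) \<Rightarrow> bool" where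
  "skew_bracoid G N act \<longleftrightarrow>
     group G \<and> group N \<and> transitive_action G (carrier N) act \<and>
     (\<forall>g\<in>carrier G. \<forall>\<mu>\<in>carrier N. \<forall>\<eta>\<in>carrier N.
        act g (\<mu> \<otimes>\<^bsub>N\<^esub> \<eta>) = act g \<mu> \<otimes>\<^bsub>N\<^esub> inv\<^bsub>N\<^esub> (act g \<one>\<^bsub>N\<^esub>) \<otimes>\<^bsub>N\<^esub> act g \<eta>)"

definition bracoid :: "('g, 'a) monoid_scheme \<Rightarrow> ('n, 'b) monoid_scheme \<Rightarrow> ('g \<Rightarrow> 'n \<Rightarrow> 'n) \<Rightarrow> bool" where
  "bracoid G N act \<longleftrightarrow> skew_bracoid G N act \<and> comm_group N"

end

theory Submission
  imports Defs
begin

theorem corollary2p5: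
  fixes G :: "('g, 'a) monoid_scheme" and N :: "('n, 'b) monoid_scheme"
    and act :: "'g \<Rightarrow> 'n \<Rightarrow> 'n"
  assumes "bracoid G N act" and "g \<in> carrier G"
  shows "(\<lambda>\<eta>. inv\<^bsub>N\<^esub> (act g \<one>\<^bsub>N\<^esub>) \<otimes>\<^bsub>N\<^esub> act g \<eta> \<otimes>\<^bsub>N\<^esub> inv\<^bsub>N\<^esub> \<eta>) \<in> hom N N"
proof -
  interpret N: comm_group N using assms(1) by (simp add: bracoid_def)
  have cl: "\<And>x. x \<in> carrier N \<Longrightarrow> act g x \<in> carrier N"
    using assms unfolding bracoid_def skew_bracoid_def transitive_action_def by blast
  have br: "\<And>\<mu> \<eta>. \<mu> \<in> carrier N \<Longrightarrow> \<eta> \<in> carrier N \<Longrightarrow>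
      act g (\<mu> \<otimes>\<^bsub>N\<^esub> \<eta>) = act g \<mu> \<otimes>\<^bsub>N\<^esub> inv\<^bsub>N\<^esub> (act g \<one>\<^bsub>N\<^esub>) \<otimes>\<^bsub>N\<^esub> act g \<eta>"
    using assms unfolding bracoid_def skew_bracoid_def by blast
  have c: "act g \<one>\<^bsub>N\<^esub> \<in> carrier N" using cl by simp
  show ?thesis
  proof (rule homI)
    fix x assume "x \<in> carrier N"
    then show "inv\<^bsub>N\<^esub> (act g \<one>\<^bsub>N\<^esub>) \<otimes>\<^bsub>N\<^esub> act g x \<otimes>\<^bsub>N\<^esub> inv\<^bsub>N\<^esub> x \<in> carrier N"
      using cl c by simp
  next
    fix x y assume x: "x \<in> carrier N" and y: "y \<in> carrier N"
    have a: "act g x \<in> carrier N" "act g y \<in> carrier N" using x y cl by auto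
    show "inv\<^bsub>N\<^esub> (act g \<one>\<^bsub>N\<^esub>) \<otimes>\<^bsub>N\<^esub> act g (x \<otimes>\<^bsub>N\<^esub> y) \<otimes>\<^bsub>N\<^esub> inv\<^bsub>N\<^esub> (x \<otimes>\<^bsub>N\<^esub> y) =
      (inv\<^bsub>N\<^esub> (act g \<one>\<^bsub>N\<^esub>) \<otimes>\<^bsub>N\<^esub> act g x \<otimes>\<^bsub>N\<^esub> inv\<^bsub>N\<^esub> x) \<otimes>\<^bsub>N\<^esub>
      (inv\<^bsub>N\<^esub> (act g \<one>\<^bsub>N\<^esub>) \<otimes>\<^bsub>N\<^esub> act g y \<otimes>\<^bsub>N\<^esub> inv\<^bsub>N\<^esub> y)"
      using x y a c by (simp add: br N.inv_mult N.m_ac)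
  qed
qed

end
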